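(* Let $\mathscr{C}=\{(\boldsymbol{u}(i),\mathcal{D}_i)\}_{i=1}^M$ be an $(n,M,\mathcal{X},\epsilon,B,\delta)$-code for the complex AWGN channel with noise variance $\sigma^2$ belonging to the family $\mathsf{C}(C,\boldsymbol{A},\boldsymbol{L},\boldsymbol{\alpha},\boldsymbol{p},\boldsymbol{r})$ described below. Then the radii $r_1,\dots,r_C$ satisfy \[ \epsilon\ge 1-\frac1M\sum_{i=1}^M\prod_{c=1}^C\left(1-\exp\!\left(-\frac{r_c^2}{\sigma^2}\right)\right)^{n\sum_{\ell=1}^{L_c}P_{\boldsymbol{u}(i)}(x_c^{(\ell)})}. \]
   Context: Channel: $f_{\boldsymbol{Y}|\boldsymbol{X}}(\boldsymbol{y}|\boldsymbol{\nu})=\prod_{m=1}^n \frac{1}{\pi\sigma^2}\exp(-|y_m-\nu_m|^2/\sigma^2)$. An $(n,M,\mathcal{X})$-code is $\{(\boldsymbol{u}(i),\mathcal{D}_i)\}_{i=1}^M$ with $\boldsymbol{u}(i)\in\mathcal{X}^n$ and pairwise disjoint $\mathcal{D}_i\subseteq\mathbb{C}^n$; $\gamma(\mathscr{C})=\frac1M\sum_i\big(1-\int_{\mathcal{D}_i}f_{\boldsymbol{Y}|\boldsymbol{X}}(\boldsymbol{y}|\boldsymbol{u}(i))\mathrm{d}\boldsymbol{y}\big)$; $e_i=k_1\sum_m|u_m(i)|^2+k_2\sum_m|u_m(i)|^4$ with positive constants $k_1,k_2$; $\theta(\mathscr{C},B)=\frac1M\sum_i\mathbb{1}_{\{e_i<B\}}$;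 an $(n,M,\mathcal{X},\epsilon,B,\delta)$-code is one with $\gamma(\mathscr{C})\le\epsilon$, $\theta(\mathscr{C},B)\le\delta$. Types: $P_{\boldsymbol{u}(i)}(x)=\frac1n\sum_m\mathbb{1}_{\{u_m(i)=x\}}$, $P_{\mathscr{C}}=\frac1M\sum_iP_{\boldsymbol{u}(i)}$. Family $\mathsf{C}(C,\boldsymbol{A},\boldsymbol{L},\boldsymbol{\alpha},\boldsymbol{p},\boldsymbol{r})$: amplitudes $A_1>\dots>A_C>0$; $L_c\in\mathbb{N}$; phases $\alpha_c$; layer $c$ is $\{x_c^{(1)},\dots,x_c^{(L_c)}\}=\{A_c\exp(\mathrm{i}(2\pi\ell/L_c+\alpha_c)):\ell=0,\dots,L_c-1\}$; $\mathcal{X}$ is the union of the layers. Codewords are pairwise distinct with $P_{\mathscr{C}}(x_c^{(\ell)})=p_c/L_c$ for a probability vector $\boldsymbol{p}$. With radii $r_c>0$ and discs $\mathcal{G}_c^{(\ell)}=\{y\in\mathbb{C}:|y-x_c^{(\ell)}|\le r_c\}$, $\mathcal{D}_i=\prod_{m=1}^n\mathcal{D}_{i,m}$ where $\mathcal{D}_{i,m}=\mathcal{G}_c^{(\ell)}$ if $u_m(i)=x_c^{(\ell)}$; and $A_c-A_{c+1}\ge r_c+r_{c+1}$ for $c<C$. *)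

theory Defs
  imports "HOL-Analysis.Analysis"
begin

text \<open>Indices are 0-based: codewords i < M, positions m < n, layers c < C,
  points l < L c. Codewords are maps u i :: nat => complex (values at m < n matter).\<close>

definition awgn_density :: "real \<Rightarrow> nat \<Rightarrow> (nat \<Rightarrow> complex) \<Rightarrow> (nat \<Rightarrow> complex) \<Rightarrow> real" where
  "awgn_density \<sigma> n \<nu> y =
     (\<Prod>m<n. 1 / (pi * \<sigma>\<^sup>2) * exp (- (cmod (y m - \<nu> m))\<^sup>2 / \<sigma>\<^sup>2))"

abbreviation cn_lebesgue :: "nat \<Rightarrow> (nat \<Rightarrow> complex) measure" where
  "cn_lebesgue n \<equiv> PiM {..<n} (\<lambda>_. lborel)"

definition avg_error :: "real \<Rightarrow> nat \<Rightarrow> nat \<Rightarrow> (nat \<Rightarrow> nat \<Rightarrow> complex)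
    \<Rightarrow> (nat \<Rightarrow> (nat \<Rightarrow> complex) set) \<Rightarrow> real" where
  "avg_error \<sigma> n M u D =
     (1 / real M) * (\<Sum>i<M. 1 - (LINT y:D i|cn_lebesgue n. awgn_density \<sigma> n (u i) y))"

definition energy :: "real \<Rightarrow> real \<Rightarrow> nat \<Rightarrow> (nat \<Rightarrow> complex) \<Rightarrow> real" where
  "energy k1 k2 n v = k1 * (\<Sum>m<n. (cmod (v m))^2) + k2 * (\<Sum>m<n. (cmod (v m))^4)"

definition energy_outage :: "real \<Rightarrow> real \<Rightarrow> nat \<Rightarrow> nat \<Rightarrow> (nat \<Rightarrow> nat \<Rightarrow> complex) \<Rightarrow> real \<Rightarrow> real" where
  "energy_outage k1 k2 n M u B = (1 / real M) * real (card {i. i < M \<and> energy k1 k2 n (u i) < B})"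

definition word_type :: "nat \<Rightarrow> (nat \<Rightarrow> complex) \<Rightarrow> complex \<Rightarrow> real" where
  "word_type n v x = (1 / real n) * real (card {m. m < n \<and> v m = x})"

definition code_type :: "nat \<Rightarrow> nat \<Rightarrow> (nat \<Rightarrow> nat \<Rightarrow> complex) \<Rightarrow> complex \<Rightarrow> real" where
  "code_type n M u x = (1 / real M) * (\<Sum>i<M. word_type n (u i) x)"

definition cpoint :: "(nat \<Rightarrow> real) \<Rightarrow> (nat \<Rightarrow> nat) \<Rightarrow> (nat \<Rightarrow> real) \<Rightarrow> nat \<Rightarrow> nat \<Rightarrow> complex" where
  "cpoint A L \<alpha> c l = complex_of_real (A c) * cis (2 * pi * real l / real (L c) + \<alpha> c)"

definition constellation :: "nat \<Rightarrow> (nat \<Rightarrow> real) \<Rightarrow> (nat \<Rightarrow> nat) \<Rightarrow> (nat \<Rightarrow> real) \<Rightarrow> complex set" where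
  "constellation C A L \<alpha> = {cpoint A L \<alpha> c l | c l. c < C \<and> l < L c}"

definition decoding_region :: "nat \<Rightarrow> nat \<Rightarrow> (nat \<Rightarrow> real) \<Rightarrow> (nat \<Rightarrow> nat) \<Rightarrow> (nat \<Rightarrow> real)
    \<Rightarrow> (nat \<Rightarrow> real) \<Rightarrow> (nat \<Rightarrow> complex) \<Rightarrow> (nat \<Rightarrow> complex) set" where
  "decoding_region n C A L \<alpha> r v =
     PiE {..<n} (\<lambda>m. \<Union>{cball (cpoint A L \<alpha> c l) (r c) | c l. c < C \<and> l < L c \<and> v m = cpoint A L \<alpha> c l})"

end

theory Submission
  imports Defs
begin

lemma exp_tail_nn:
  fixes t a :: real assumes "t \<le> a"
  shows "(\<integral>\<^sup>+s. ennreal (exp (- s)) * indicator {t..a} s \<partial>lborel) = ennreal (exp (-t) - exp (-a))"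
proof -
  have "((\<lambda>s. exp (- s)) has_integral ((- exp (-a)) - (- exp (-t)))) {t..a}"
    by (rule fundamental_theorem_of_calculus[OF assms])
       (auto intro!: derivative_eq_intros simp: has_real_derivative_iff_has_vector_derivative[symmetric])
  then show ?thesis
    by (subst nn_integral_has_integral_lebesgue'[of _ _ "exp (-t) - exp (-a)"]) auto
qed


lemma sexp_nn:
  fixes a :: real assumes "0 \<le> a"
  shows "(\<integral>\<^sup>+s. ennreal (s * exp (- s)) * indicator {0..a} s \<partial>lborel) = ennreal (1 - (a+1) * exp (-a))"
proof -
  have "((\<lambda>s. s * exp (- s)) has_integral ((- (a+1) * exp (-a)) - (- (0+1) * exp (-0)))) {0..a}"
    by (rule fundamental_theorem_of_calculus[OF assms])
       (auto intro!: derivative_eq_intros simp: has_real_derivative_iff_has_vector_derivative[symmetric] algebra_simps)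
  moreover have "(- (a+1) * exp (-a)) - (- (0+1) * exp (-0)) = 1 - (a+1) * exp (-a)" by (simp add: algebra_simps)
  ultimately have "((\<lambda>s. s * exp (- s)) has_integral (1 - (a+1) * exp (-a))) {0..a}" by simp
  then show ?thesis
    by (subst nn_integral_has_integral_lebesgue'[of _ _ "1 - (a+1) * exp (-a)"]) auto
qed

lemma disc_measure:
  fixes x :: complex and s q :: real assumes "q > 0"
  shows "emeasure lborel {y. (cmod (y - x))\<^sup>2 / q \<le> s} = ennreal (pi * q * s) * indicator {0..} s"
proof (cases "s \<ge> 0")
  case True
  have "{y. (cmod (y - x))\<^sup>2 / q \<le> s} = cball x (sqrt (q * s))"
  proof (intro set_eqI iffI)
    fix y assume "y \<in> {y. (cmod (y - x))\<^sup>2 / q \<le> s}"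
    then have "(cmod (y - x))\<^sup>2 \<le> q * s" using assms by (simp add: divide_le_eq mult.commute)
    then have "cmod (y - x) \<le> sqrt (q * s)" using real_le_rsqrt by blast
    then show "y \<in> cball x (sqrt (q * s))" by (simp add: dist_norm norm_minus_commute)
  next
    fix y assume "y \<in> cball x (sqrt (q * s))"
    then have "cmod (y - x) \<le> sqrt (q * s)" by (simp add: dist_norm norm_minus_commute)
    then have "(cmod (y - x))\<^sup>2 \<le> q * s"
      using True assms by (metis norm_ge_zero power_mono real_sqrt_pow2 zero_le_mult_iff less_imp_le)
    then show "y \<in> {y. (cmod (y - x))\<^sup>2 / q \<le> s}" using assms by (simp add: divide_le_eq mult.commute)
  qed
  moreover have "sqrt (q * s) ^ 2 = q * s" using True assms by simp
  ultimately show ?thesis using True assms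
    by (simp add: emeasure_cball unit_ball_vol_2 mult.commute)
next
  case False
  have "{y. (cmod (y - x))\<^sup>2 / q \<le> s} = {}"
    using assms False by (auto simp: not_le) (smt (verit) divide_nonneg_pos zero_le_power2)
  then show ?thesis using False by simp
qed

lemma disc_gauss_nn:
  fixes x :: complex and q \<rho> :: real assumes q: "q > 0" and rho: "\<rho> > 0"
  shows "(\<integral>\<^sup>+y. ennreal (exp (- (cmod (y - x))\<^sup>2 / q)) * indicator (cball x \<rho>) y \<partial>lborel)
          = ennreal (pi * q * (1 - exp (- \<rho>\<^sup>2 / q)))"
proof -
  define a where "a = \<rho>\<^sup>2 / q"
  have a0: "a \<ge> 0" using q by (simp add: a_def)
  have rho2: "\<rho>\<^sup>2 = a * q" using q by (simp add: a_def)
  define f where "f = (\<lambda>(y::complex) (s::real). ennreal (if (cmod (y - x))\<^sup>2 / q \<le> s \<and> s \<le> a then exp (- s) else 0))"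
  have fm: "case_prod f \<in> borel_measurable (lborel \<Otimes>\<^sub>M lborel)"
    unfolding f_def by measurable
  have inner_s: "(\<integral>\<^sup>+s. f y s \<partial>lborel) = ennreal (exp (- (cmod (y - x))\<^sup>2 / q) - exp (- a)) * indicator (cball x \<rho>) y" for y
  proof -
    define t where "t = (cmod (y - x))\<^sup>2 / q"
    have "(\<integral>\<^sup>+s. f y s \<partial>lborel) = (\<integral>\<^sup>+s. ennreal (exp (- s)) * indicator {t..a} s \<partial>lborel)"
      by (rule nn_integral_cong) (auto simp: f_def t_def indicator_def)
    also have "\<dots> = ennreal (exp (- t) - exp (- a)) * indicator (cball x \<rho>) y"
    proof (cases "t \<le> a")
      case True
      then have "(cmod (y - x))\<^sup>2 \<le> \<rho>\<^sup>2"
        using q by (simp add: t_def a_def divide_right_mono_neg divide_le_cancel)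
      then have "cmod (y - x) \<le> \<rho>" using rho by (simp add: power2_le_iff_abs_le)
      then have "y \<in> cball x \<rho>" by (simp add: dist_norm norm_minus_commute)
      then show ?thesis using exp_tail_nn[OF True] by simp
    next
      case False
      then have "y \<notin> cball x \<rho>"
        using q rho by (auto simp: t_def a_def dist_norm norm_minus_commute intro!: divide_right_mono power_mono)
      then show ?thesis using False by simp
    qed
    finally show ?thesis by (simp add: t_def)
  qed
  have inner_y: "(\<integral>\<^sup>+y. f y s \<partial>lborel) = ennreal (pi * q) * (ennreal (s * exp (- s)) * indicator {0..a} s)" for s
  proof -
    have "(\<integral>\<^sup>+y. f y s \<partial>lborel) = (\<integral>\<^sup>+y. (ennreal (exp (- s)) * indicator {..a} s) * indicator {y. (cmod (y - x))\<^sup>2 / q \<le> s} y \<partial>lborel)"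
      by (rule nn_integral_cong) (auto simp: f_def indicator_def)
    also have "\<dots> = (ennreal (exp (- s)) * indicator {..a} s) * emeasure lborel {y. (cmod (y - x))\<^sup>2 / q \<le> s}"
      by (rule nn_integral_cmult_indicator) measurable
    also have "\<dots> = ennreal (pi * q) * (ennreal (s * exp (- s)) * indicator {0..a} s)"
      using q by (auto simp: disc_measure indicator_def ennreal_mult'[symmetric] mult_ac)
    finally show ?thesis .
  qed
  have ps: "pair_sigma_finite (lborel :: complex measure) (lborel :: real measure)"
    by (simp add: pair_sigma_finite_def lborel.sigma_finite_measure_axioms)
  have "(\<integral>\<^sup>+y. ennreal (exp (- (cmod (y - x))\<^sup>2 / q)) * indicator (cball x \<rho>) y \<partial>lborel)
      = (\<integral>\<^sup>+y. ennreal (exp (- a)) * indicator (cball x \<rho>) y + (\<integral>\<^sup>+s. f y s \<partial>lborel) \<partial>lborel)"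
  proof (rule nn_integral_cong)
    fix y :: complex
    show "ennreal (exp (- (cmod (y - x))\<^sup>2 / q)) * indicator (cball x \<rho>) y = ennreal (exp (- a)) * indicator (cball x \<rho>) y + (\<integral>\<^sup>+s. f y s \<partial>lborel)"
    proof (cases "y \<in> cball x \<rho>")
      case True
      then have "cmod (y - x) \<le> \<rho>" by (simp add: dist_norm norm_minus_commute)
      then have "(cmod (y - x))\<^sup>2 / q \<le> a" using q unfolding a_def
        by (intro divide_right_mono power_mono) auto
      then have "exp (- a) \<le> exp (- (cmod (y - x))\<^sup>2 / q)" by simp
      then show ?thesis using True by (simp add: inner_s ennreal_plus[symmetric])
    qed (simp add: inner_s)
  qed
  also have "\<dots> = ennreal (exp (- a)) * emeasure lborel (cball x \<rho>) + (\<integral>\<^sup>+y. (\<integral>\<^sup>+s. f y s \<partial>lborel) \<partial>lborel)"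
  proof -
    have m2: "(\<lambda>y. \<integral>\<^sup>+s. f y s \<partial>lborel) \<in> borel_measurable (lborel :: complex measure)"
      using lborel.borel_measurable_nn_integral[OF fm] by simp
    have m1: "(\<lambda>y::complex. ennreal (exp (- a)) * indicator (cball x \<rho>) y) \<in> borel_measurable lborel"
      by (intro borel_measurable_times_ennreal borel_measurable_const borel_measurable_indicator) (auto intro: borel_closed)
    show ?thesis
      by (subst nn_integral_add[OF m1 m2]) (simp add: nn_integral_cmult_indicator)
  qed
  also have "(\<integral>\<^sup>+y. (\<integral>\<^sup>+s. f y s \<partial>lborel) \<partial>lborel) = (\<integral>\<^sup>+s. (\<integral>\<^sup>+y. f y s \<partial>lborel) \<partial>lborel)"
    using pair_sigma_finite.Fubini'[OF ps fm] by simp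
  also have "\<dots> = ennreal (pi * q) * ennreal (1 - (a+1) * exp (-a))"
    by (simp add: inner_y nn_integral_cmult sexp_nn[OF a0])
  also have "emeasure lborel (cball x \<rho>) = ennreal (pi * (a * q))"
    using rho rho2 by (simp add: emeasure_cball unit_ball_vol_2 mult.commute)
  also have "ennreal (exp (- a)) * ennreal (pi * (a * q)) + ennreal (pi * q) * ennreal (1 - (a+1) * exp (-a))
      = ennreal (exp (- a) * (pi * (a * q)) + pi * q * (1 - (a+1) * exp (-a)))"
  proof -
    have "1 + a \<le> exp a" by (rule exp_ge_add_one_self)
    then have "(a+1) * exp (-a) \<le> 1" by (simp add: exp_minus field_simps)
    then have nn: "0 \<le> 1 - (a+1) * exp (-a)" by simp
    have p1: "0 \<le> exp (- a) * (pi * (a * q))" using a0 q by simp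
    have p2: "0 \<le> pi * q * (1 - (a+1) * exp (-a))" using nn q by simp
    have e1: "ennreal (exp (- a)) * ennreal (pi * (a * q)) = ennreal (exp (- a) * (pi * (a * q)))"
      by (rule ennreal_mult[symmetric]) (use a0 q in auto)
    have e2: "ennreal (pi * q) * ennreal (1 - (a+1) * exp (-a)) = ennreal (pi * q * (1 - (a+1) * exp (-a)))"
      by (rule ennreal_mult[symmetric]) (use nn q in auto)
    show ?thesis unfolding e1 e2 by (rule ennreal_plus[symmetric, OF p1 p2])
  qed
  also have "exp (- a) * (pi * (a * q)) + pi * q * (1 - (a+1) * exp (-a)) = pi * q * (1 - exp (- \<rho>\<^sup>2 / q))"
    by (simp add: a_def algebra_simps)
  finally show ?thesis .
qed


lemma disc_gauss_nn2:
  fixes x :: complex and q \<rho> :: real assumes q: "q > 0" and rho: "\<rho> > 0"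
  shows "(\<integral>\<^sup>+z. ennreal (indicator (cball x \<rho>) z * (1 / (pi * q) * exp (- (cmod (z - x))\<^sup>2 / q))) \<partial>lborel)
          = ennreal (1 - exp (- \<rho>\<^sup>2 / q))"
proof -
  have "(\<integral>\<^sup>+z. ennreal (indicator (cball x \<rho>) z * (1 / (pi * q) * exp (- (cmod (z - x))\<^sup>2 / q))) \<partial>lborel)
     = (\<integral>\<^sup>+z. ennreal (1 / (pi * q)) * (ennreal (exp (- (cmod (z - x))\<^sup>2 / q)) * indicator (cball x \<rho>) z) \<partial>lborel)"
    using q by (intro nn_integral_cong) (auto simp: indicator_def ennreal_mult'[symmetric])
  also have "\<dots> = ennreal (1 / (pi * q)) * (\<integral>\<^sup>+z. ennreal (exp (- (cmod (z - x))\<^sup>2 / q)) * indicator (cball x \<rho>) z \<partial>lborel)"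
    by (rule nn_integral_cmult) (auto intro!: borel_measurable_times_ennreal borel_measurable_indicator borel_closed)
  also have "\<dots> = ennreal (1 / (pi * q)) * ennreal (pi * q * (1 - exp (- \<rho>\<^sup>2 / q)))"
    by (simp only: disc_gauss_nn[OF q rho])
  also have "\<dots> = ennreal (1 / (pi * q) * (pi * q * (1 - exp (- \<rho>\<^sup>2 / q))))"
    using q by (intro ennreal_mult[symmetric]) auto
  also have "1 / (pi * q) * (pi * q * (1 - exp (- \<rho>\<^sup>2 / q))) = 1 - exp (- \<rho>\<^sup>2 / q)"
    using q by simp
  finally show ?thesis .
qed

lemma prod_disc_integral:
  fixes n :: nat and v :: "nat \<Rightarrow> complex" and \<rho> :: "nat \<Rightarrow> real" and \<sigma> :: real
  assumes sig: "\<sigma> > 0" and rho: "\<And>m. m < n \<Longrightarrow> \<rho> m > 0"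
  shows "(LINT y:PiE {..<n} (\<lambda>m. cball (v m) (\<rho> m))|cn_lebesgue n. awgn_density \<sigma> n v y)
         = (\<Prod>m<n. 1 - exp (- (\<rho> m)\<^sup>2 / \<sigma>\<^sup>2))"
proof -
  define S where "S = PiE {..<n} (\<lambda>m. cball (v m) (\<rho> m))"
  define h where "h = (\<lambda>m (z::complex). indicator (cball (v m) (\<rho> m)) z * (1 / (pi * \<sigma>\<^sup>2) * exp (- (cmod (z - v m))\<^sup>2 / \<sigma>\<^sup>2)))"
  have q: "\<sigma>\<^sup>2 > 0" using sig by simp
  have Sm: "S \<in> sets (cn_lebesgue n)"
    unfolding S_def by (rule sets_PiM_I_finite) (auto intro: borel_closed)
  have am: "awgn_density \<sigma> n v \<in> borel_measurable (cn_lebesgue n)"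
    unfolding awgn_density_def by measurable
  have cbm[measurable]: "cball (v m) (\<rho> m) \<in> sets borel" for m by (auto intro: borel_closed)
  have hm: "(\<lambda>z. ennreal (h m z)) \<in> borel_measurable borel" for m
    unfolding h_def by measurable
  have anonneg: "\<And>y. 0 \<le> awgn_density \<sigma> n v y"
    unfolding awgn_density_def by (intro prod_nonneg) auto
  have "(LINT y:S|cn_lebesgue n. awgn_density \<sigma> n v y)
      = integral\<^sup>L (cn_lebesgue n) (\<lambda>y. indicator S y * awgn_density \<sigma> n v y)"
    by (simp add: set_lebesgue_integral_def)
  also have "\<dots> = enn2real (\<integral>\<^sup>+y. ennreal (indicator S y * awgn_density \<sigma> n v y) \<partial>cn_lebesgue n)"
    using Sm am anonneg by (intro integral_eq_nn_integral AE_I2 mult_nonneg_nonneg) auto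
  also have "(\<integral>\<^sup>+y. ennreal (indicator S y * awgn_density \<sigma> n v y) \<partial>cn_lebesgue n)
      = (\<integral>\<^sup>+y. (\<Prod>m<n. ennreal (h m (y m))) \<partial>cn_lebesgue n)"
  proof (rule nn_integral_cong)
    fix y assume y: "y \<in> space (cn_lebesgue n)"
    have "indicator S y * awgn_density \<sigma> n v y = (\<Prod>m<n. h m (y m))"
    proof (cases "y \<in> S")
      case True
      then have yin: "\<forall>m<n. y m \<in> cball (v m) (\<rho> m)" unfolding S_def by (simp add: PiE_iff)
      have "(\<Prod>m<n. h m (y m)) = (\<Prod>m<n. 1 / (pi * \<sigma>\<^sup>2) * exp (- (cmod (y m - v m))\<^sup>2 / \<sigma>\<^sup>2))"
        by (rule prod.cong) (use yin in \<open>auto simp: h_def\<close>)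
      then show ?thesis using True by (simp only: awgn_density_def indicator_simps mult_1)
    next
      case False
      have "y \<in> extensional {..<n}" using y by (simp add: space_PiM PiE_iff)
      with False obtain m where "m < n" "y m \<notin> cball (v m) (\<rho> m)"
        unfolding S_def PiE_iff by blast
      then have "h m (y m) = 0" by (simp add: h_def)
      then have "(\<Prod>m<n. h m (y m)) = 0" using \<open>m < n\<close> by (intro prod_zero) auto
      then show ?thesis using False by simp
    qed
    moreover have "\<And>m. 0 \<le> h m (y m)" by (simp add: h_def)
    ultimately show "ennreal (indicator S y * awgn_density \<sigma> n v y) = (\<Prod>m<n. ennreal (h m (y m)))"
      by (simp add: prod_ennreal)
  qed
  also have "\<dots> = (\<Prod>m<n. \<integral>\<^sup>+z. ennreal (h m z) \<partial>lborel)"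
  proof -
    interpret product_sigma_finite "\<lambda>_::nat. lborel :: complex measure"
      by (simp add: product_sigma_finite_def lborel.sigma_finite_measure_axioms)
    show ?thesis
      by (rule product_nn_integral_prod) (auto simp: hm)
  qed
  also have "\<dots> = (\<Prod>m<n. ennreal (1 - exp (- (\<rho> m)\<^sup>2 / \<sigma>\<^sup>2)))"
  proof (intro prod.cong refl)
    fix m assume "m \<in> {..<n}"
    then show "(\<integral>\<^sup>+z. ennreal (h m z) \<partial>lborel) = ennreal (1 - exp (- (\<rho> m)\<^sup>2 / \<sigma>\<^sup>2))"
      unfolding h_def using disc_gauss_nn2[OF q rho[of m]] by simp
  qed
  also have "\<dots> = ennreal (\<Prod>m<n. 1 - exp (- (\<rho> m)\<^sup>2 / \<sigma>\<^sup>2))"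
    using q by (intro prod_ennreal) auto
  finally show ?thesis unfolding S_def using q by (simp add: prod_nonneg)
qed

lemma cis_layer_inj:
  fixes L l l' :: nat and \<alpha> :: real
  assumes l: "l < L" and l': "l' < L"
    and eq: "cis (2 * pi * real l / real L + \<alpha>) = cis (2 * pi * real l' / real L + \<alpha>)"
  shows "l = l'"
proof -
  have L0: "real L > 0" using l by simp
  from eq have "exp (\<i> * complex_of_real (2 * pi * real l / real L + \<alpha>)) = exp (\<i> * complex_of_real (2 * pi * real l' / real L + \<alpha>))"
    by (simp add: cis_conv_exp)
  then obtain k :: int where k: "\<i> * complex_of_real (2 * pi * real l / real L + \<alpha>) = \<i> * complex_of_real (2 * pi * real l' / real L + \<alpha>) + (of_int (2 * k) * pi) * \<i>"
    unfolding exp_eq by blast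
  then have "Im (\<i> * complex_of_real (2 * pi * real l / real L + \<alpha>)) = Im (\<i> * complex_of_real (2 * pi * real l' / real L + \<alpha>) + (of_int (2 * k) * pi) * \<i>)"
    by simp
  then have "2 * pi * real l / real L + \<alpha> = 2 * pi * real l' / real L + \<alpha> + 2 * real_of_int k * pi"
    by simp
  then have "2 * pi * real l = 2 * pi * real l' + 2 * real_of_int k * pi * real L"
    using L0 by (simp add: field_simps)
  then have "2 * pi * real l = 2 * pi * (real l' + real_of_int k * real L)"
    by (simp add: algebra_simps)
  then have "real l = real l' + real_of_int k * real L"
    by simp
  then have "real_of_int (int l) = real_of_int (int l' + k * int L)" by simp
  then have ki: "int l = int l' + k * int L" by (simp only: of_int_eq_iff)
  have "k = 0"
  proof (rule ccontr)
    assume "k \<noteq> 0"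
    then have "k \<ge> 1 \<or> k \<le> -1" by linarith
    then show False
    proof
      assume "k \<ge> 1"
      then have "k * int L \<ge> 1 * int L" by (intro mult_right_mono) auto
      then show False using ki l by linarith
    next
      assume "k \<le> -1"
      then have "k * int L \<le> (-1) * int L" by (intro mult_right_mono) auto
      then show False using ki l' by linarith
    qed
  qed
  then show ?thesis using ki by simp
qed

theorem lemma4:
  fixes n M C :: nat and \<sigma> \<epsilon> B \<delta> k1 k2 :: real
    and A \<alpha> p r :: "nat \<Rightarrow> real" and L :: "nat \<Rightarrow> nat"
    and u :: "nat \<Rightarrow> nat \<Rightarrow> complex" and D :: "nat \<Rightarrow> (nat \<Rightarrow> complex) set"
  assumes n_pos: "n \<ge> 1" and M_pos: "M \<ge> 1" and sigma_pos: "\<sigma> > 0"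
    and k_pos: "k1 > 0" "k2 > 0"
    and C_pos: "C \<ge> 1"
    and A_pos: "\<And>c. c < C \<Longrightarrow> A c > 0"
    and A_dec: "\<And>c. c + 1 < C \<Longrightarrow> A c > A (c + 1)"
    and L_pos: "\<And>c. c < C \<Longrightarrow> L c \<ge> 1"
    and p_nonneg: "\<And>c. c < C \<Longrightarrow> p c \<ge> 0" and p_sum: "(\<Sum>c<C. p c) = 1"
    and r_pos: "\<And>c. c < C \<Longrightarrow> r c > 0"
    and r_sep: "\<And>c. c + 1 < C \<Longrightarrow> A c - A (c + 1) \<ge> r c + r (c + 1)"
    and u_in: "\<And>i m. i < M \<Longrightarrow> m < n \<Longrightarrow> u i m \<in> constellation C A L \<alpha>"
    and u_distinct: "\<And>i j. i < M \<Longrightarrow> j < M \<Longrightarrow> i \<noteq> j \<Longrightarrow> \<exists>m<n. u i m \<noteq> u j m"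
    and type_cond: "\<And>c l. c < C \<Longrightarrow> l < L c \<Longrightarrow>
                      code_type n M u (cpoint A L \<alpha> c l) = p c / real (L c)"
    and D_def: "\<And>i. i < M \<Longrightarrow> D i = decoding_region n C A L \<alpha> r (u i)"
    and D_disj: "disjoint_family_on D {..<M}"
    and err: "avg_error \<sigma> n M u D \<le> \<epsilon>"
    and outage: "energy_outage k1 k2 n M u B \<le> \<delta>"
  shows "\<epsilon> \<ge> 1 - (1 / real M) * (\<Sum>i<M. \<Prod>c<C.
            (1 - exp (- (r c)\<^sup>2 / \<sigma>\<^sup>2)) powr
              (real n * (\<Sum>l<L c. word_type n (u i) (cpoint A L \<alpha> c l))))"
proof -
  have A_strict: "A c' < A c" if "c < c'" "c' < C" for c c'
    using that
  proof (induction c')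
    case 0 then show ?case by simp
  next
    case (Suc k)
    have "A (Suc k) < A k" using A_dec[of k] Suc.prems by simp
    then show ?case
    proof (cases "c = k")
      case False
      then have "A k < A c" using Suc by simp
      then show ?thesis using \<open>A (Suc k) < A k\<close> by simp
    qed simp
  qed
  have A_inj: "c = c'" if "c < C" "c' < C" "A c = A c'" for c c'
    using that A_strict by (metis less_irrefl linorder_neqE_nat)
  have cnorm: "cmod (cpoint A L \<alpha> c l) = A c" if "c < C" for c l
    using A_pos[OF that] by (simp add: cpoint_def norm_mult)
  have cp_inj: "c = c' \<and> l = l'" if "c < C" "c' < C" "l < L c" "l' < L c'"
     "cpoint A L \<alpha> c l = cpoint A L \<alpha> c' l'" for c c' l l'
  proof -
    have "A c = A c'" using cnorm that by metis
    then have cc: "c = c'" using A_inj that by blast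
    have "A c \<noteq> 0" using A_pos that by fastforce
    then have "cis (2 * pi * real l / real (L c) + \<alpha> c) = cis (2 * pi * real l' / real (L c) + \<alpha> c)"
      using that(5) cc by (simp add: cpoint_def)
    then have "l = l'" using cis_layer_inj that cc by blast
    then show ?thesis using cc by simp
  qed
  define q where "q = (\<lambda>c. 1 - exp (- (r c)\<^sup>2 / \<sigma>\<^sup>2))"
  have q_pos: "q c > 0" if "c < C" for c
  proof -
    have "(r c)\<^sup>2 / \<sigma>\<^sup>2 > 0" using r_pos[OF that] sigma_pos by simp
    then show ?thesis by (simp add: q_def)
  qed
  have key: "(LINT y:D i|cn_lebesgue n. awgn_density \<sigma> n (u i) y) =
      (\<Prod>c<C. q c powr (real n * (\<Sum>l<L c. word_type n (u i) (cpoint A L \<alpha> c l))))"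
    if i: "i < M" for i
  proof -
    define v where "v = u i"
    have ex: "\<exists>c l. c < C \<and> l < L c \<and> v m = cpoint A L \<alpha> c l" if "m < n" for m
      using u_in[OF i that] by (auto simp: v_def constellation_def)
    define lay where "lay = (\<lambda>m. THE c. c < C \<and> (\<exists>l<L c. v m = cpoint A L \<alpha> c l))"
    have lay_eq: "lay m = c" if "c < C" "l < L c" "v m = cpoint A L \<alpha> c l" for m c l
      unfolding lay_def
    proof (rule the_equality)
      show "c < C \<and> (\<exists>l<L c. v m = cpoint A L \<alpha> c l)" using that by blast
    next
      fix c' assume "c' < C \<and> (\<exists>l<L c'. v m = cpoint A L \<alpha> c' l)"
      then obtain l' where l': "c' < C" "l' < L c'" "v m = cpoint A L \<alpha> c' l'" by blast
      have "cpoint A L \<alpha> c' l' = cpoint A L \<alpha> c l" by (simp only: l'(3)[symmetric] that(3))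
      then show "c' = c" using cp_inj[OF l'(1) that(1) l'(2) that(2)] by blast
    qed
    have lay_prop: "lay m < C \<and> (\<exists>l<L (lay m). v m = cpoint A L \<alpha> (lay m) l)" if mn: "m < n" for m
    proof -
      obtain c l where cl: "c < C" "l < L c" "v m = cpoint A L \<alpha> c l" using ex[OF mn] by blast
      then have "lay m = c" by (rule lay_eq)
      then show ?thesis using cl by blast
    qed
    have reg: "D i = PiE {..<n} (\<lambda>m. cball (v m) (r (lay m)))"
      unfolding D_def[OF i] decoding_region_def v_def[symmetric]
    proof (rule PiE_cong)
      fix m assume "m \<in> {..<n}"
      then have m: "m < n" by simp
      have "{cball (cpoint A L \<alpha> c l) (r c) |c l. c < C \<and> l < L c \<and> v m = cpoint A L \<alpha> c l}
          = {cball (v m) (r (lay m))}"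
      proof (intro set_eqI iffI)
        fix X assume "X \<in> {cball (cpoint A L \<alpha> c l) (r c) |c l. c < C \<and> l < L c \<and> v m = cpoint A L \<alpha> c l}"
        then obtain c l where X: "X = cball (cpoint A L \<alpha> c l) (r c)" and cl: "c < C" "l < L c" "v m = cpoint A L \<alpha> c l" by blast
        show "X \<in> {cball (v m) (r (lay m))}" using lay_eq[OF cl] X cl(3) by simp
      next
        fix X assume "X \<in> {cball (v m) (r (lay m))}"
        then have X: "X = cball (v m) (r (lay m))" by simp
        obtain l where "lay m < C" "l < L (lay m)" "v m = cpoint A L \<alpha> (lay m) l" using lay_prop[OF m] by blast
        then show "X \<in> {cball (cpoint A L \<alpha> c l) (r c) |c l. c < C \<and> l < L c \<and> v m = cpoint A L \<alpha> c l}"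
          using X by auto
      qed
      then show "\<Union>{cball (cpoint A L \<alpha> c l) (r c) |c l. c < C \<and> l < L c \<and> v m = cpoint A L \<alpha> c l}
          = cball (v m) (r (lay m))" by simp
    qed
    have int: "(LINT y:D i|cn_lebesgue n. awgn_density \<sigma> n (u i) y) = (\<Prod>m<n. q (lay m))"
      unfolding reg v_def[symmetric] q_def
      by (rule prod_disc_integral[OF sigma_pos]) (use lay_prop r_pos in blast)
    have cnt: "real n * (\<Sum>l<L c. word_type n v (cpoint A L \<alpha> c l)) = real (card {m \<in> {..<n}. lay m = c})"
      if c: "c < C" for c
    proof -
      have "real n * (\<Sum>l<L c. word_type n v (cpoint A L \<alpha> c l))
          = real (\<Sum>l<L c. card {m. m < n \<and> v m = cpoint A L \<alpha> c l})"
        using n_pos by (simp add: word_type_def sum_distrib_left)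
      also have "(\<Sum>l<L c. card {m. m < n \<and> v m = cpoint A L \<alpha> c l})
          = card (\<Union>l\<in>{..<L c}. {m. m < n \<and> v m = cpoint A L \<alpha> c l})"
      proof (rule card_UN_disjoint[symmetric])
        show "\<forall>l\<in>{..<L c}. \<forall>l'\<in>{..<L c}. l \<noteq> l' \<longrightarrow>
            {m. m < n \<and> v m = cpoint A L \<alpha> c l} \<inter> {m. m < n \<and> v m = cpoint A L \<alpha> c l'} = {}"
        proof (intro ballI impI)
          fix l l' assume ll: "l \<in> {..<L c}" "l' \<in> {..<L c}" "l \<noteq> l'"
          have "cpoint A L \<alpha> c l \<noteq> cpoint A L \<alpha> c l'"
            using cp_inj[OF c c] ll by auto
          then show "{m. m < n \<and> v m = cpoint A L \<alpha> c l} \<inter> {m. m < n \<and> v m = cpoint A L \<alpha> c l'} = {}"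
            by auto
        qed
      qed auto
      also have "(\<Union>l\<in>{..<L c}. {m. m < n \<and> v m = cpoint A L \<alpha> c l}) = {m \<in> {..<n}. lay m = c}"
      proof (intro set_eqI iffI)
        fix m assume "m \<in> (\<Union>l\<in>{..<L c}. {m. m < n \<and> v m = cpoint A L \<alpha> c l})"
        then obtain l where l: "l < L c" "m < n" "v m = cpoint A L \<alpha> c l" by blast
        then show "m \<in> {m \<in> {..<n}. lay m = c}" using lay_eq[OF c l(1) l(3)] by simp
      next
        fix m assume "m \<in> {m \<in> {..<n}. lay m = c}"
        then have m: "m < n" "lay m = c" by auto
        then obtain l where "l < L c" "v m = cpoint A L \<alpha> c l" using lay_prop[OF m(1)] by auto
        then show "m \<in> (\<Union>l\<in>{..<L c}. {m. m < n \<and> v m = cpoint A L \<alpha> c l})" using m by blast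
      qed
      finally show ?thesis .
    qed
    have "(\<Prod>c<C. q c powr (real n * (\<Sum>l<L c. word_type n v (cpoint A L \<alpha> c l))))
        = (\<Prod>c<C. q c ^ card {m \<in> {..<n}. lay m = c})"
      by (rule prod.cong) (auto simp: cnt q_pos powr_realpow)
    also have "\<dots> = (\<Prod>c<C. \<Prod>m\<in>{m \<in> {..<n}. lay m = c}. q (lay m))"
      by (rule prod.cong) auto
    also have "\<dots> = (\<Prod>m<n. q (lay m))"
      by (rule prod.group) (use lay_prop in auto)
    finally show ?thesis using int v_def by simp
  qed
  have "avg_error \<sigma> n M u D = 1 - (1 / real M) * (\<Sum>i<M. \<Prod>c<C.
            (1 - exp (- (r c)\<^sup>2 / \<sigma>\<^sup>2)) powr
              (real n * (\<Sum>l<L c. word_type n (u i) (cpoint A L \<alpha> c l))))"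
  proof -
    define Y where "Y = (\<lambda>i. \<Prod>c<C. (1 - exp (- (r c)\<^sup>2 / \<sigma>\<^sup>2)) powr
              (real n * (\<Sum>l<L c. word_type n (u i) (cpoint A L \<alpha> c l))))"
    have "avg_error \<sigma> n M u D = (1 / real M) * (\<Sum>i<M. 1 - Y i)"
      unfolding avg_error_def by (intro arg_cong[where f="\<lambda>x. (1 / real M) * x"] sum.cong refl) (simp add: key Y_def q_def)
    also have "\<dots> = (1 / real M) * (real M - (\<Sum>i<M. Y i))"
      by (simp add: sum_subtractf)
    also have "\<dots> = 1 - (1 / real M) * (\<Sum>i<M. Y i)"
      using M_pos by (simp add: right_diff_distrib)
    finally show ?thesis unfolding Y_def .
  qed
  then show ?thesis using err by linarith
qed

end
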